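(* Let $r\ge 2$ be an integer, $\tau_0>0$, $k_a\in(0,\tfrac12)$, and $$h_w> \frac{4\tau_0}{(1+r)(1+2k_a)}.$$ Then there exist $k_v>0$, $k_p>0$ such that for every $\tau\in[0,\tau_0]$, the polynomial $\tau s^3+s^2+(2k_v+(1+r)k_ph_w)s+2k_p$ is Hurwitz and $$2\sup_{\omega\in\mathbb{R}}|H_0(j\omega;\tau)|\le 1,\qquad H_0(s;\tau)=\frac{k_as^2+k_vs+k_p}{\tau s^3+s^2+(2k_v+(1+r)k_ph_w)s+2k_p}.$$ Consequently, for every $\tau\in[0,\tau_0]$ and $\omega\in\mathbb{R}$, all roots of $z^r-H_0(j\omega;\tau)z^{r-1}-H_0(j\omega;\tau)$ satisfy $|z|\le1$ (robust string stability).
   Context: Platoon of identical vehicles with dynamics $\ddot x_i=a_i$, $\tau\dot a_i+a_i=u_i$, parasitic lag $\tau\in[0,\tau_0]$, each vehicle using information from its immediate predecessor and its $r$-th predecessor via $u_i=\sum_{l\in\{1,r\}}\big[k_a a_{i-l}-k_v(v_i-v_{i-l})-k_p(x_i-x_{i-l}+d_l+l h_w v_i)\big]$ (equal gains for $l=1$ and $l=r$). With spacing errors $e_i=x_i-x_{i-1}+d+h_wv_i$, errors propagate as $E_i(s)=H_0(s)E_{i-1}(s)+H_0(s)E_{i-r}(s)$. *)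

theory Defs
  imports Complex_Main "HOL-Computational_Algebra.Polynomial"
begin

definition hurwitz :: "complex poly \<Rightarrow> bool" where
  "hurwitz p \<longleftrightarrow> p \<noteq> 0 \<and> (\<forall>z. poly p z = 0 \<longrightarrow> Re z < 0)"

definition char_poly :: "nat \<Rightarrow> real \<Rightarrow> real \<Rightarrow> real \<Rightarrow> real \<Rightarrow> complex poly" where
  "char_poly r hw kv kp tau =
     [: complex_of_real (2 * kp), complex_of_real (2 * kv + (1 + real r) * kp * hw), 1,
        complex_of_real tau :]"

definition H0 :: "nat \<Rightarrow> real \<Rightarrow> real \<Rightarrow> real \<Rightarrow> real \<Rightarrow> real \<Rightarrow> complex \<Rightarrow> complex" where
  "H0 r hw ka kv kp tau s =
     (complex_of_real ka * s^2 + complex_of_real kv * s + complex_of_real kp)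
     / poly (char_poly r hw kv kp tau) s"

end

theory Submission
  imports Defs
begin

lemma poly_re_im:
  fixes a b d :: real and z :: complex
  shows "Re (poly [:complex_of_real a, complex_of_real b, 1, complex_of_real d:] z) =
           a + b * Re z + (Re z ^ 2 - Im z ^ 2) + d * (Re z ^ 3 - 3 * Re z * Im z ^ 2)"
    and "Im (poly [:complex_of_real a, complex_of_real b, 1, complex_of_real d:] z) =
           b * Im z + 2 * Re z * Im z + d * (3 * Re z ^ 2 * Im z - Im z ^ 3)"
  by (simp_all add: algebra_simps power2_eq_square power3_eq_cube)

lemma cubic_hurwitz:
  fixes tau c kp :: real
  assumes "tau \<ge> 0" "c > 0" "kp > 0" "c > 2 * kp * tau"
  shows "hurwitz [:complex_of_real (2*kp), complex_of_real c, 1, complex_of_real tau:]"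
  unfolding hurwitz_def
proof (intro conjI allI impI)
  show "[:complex_of_real (2*kp), complex_of_real c, 1, complex_of_real tau:] \<noteq> 0" by simp
next
  fix z assume h: "poly [:complex_of_real (2*kp), complex_of_real c, 1, complex_of_real tau:] z = 0"
  define x where "x = Re z"
  define y where "y = Im z"
  have e1: "2*kp + c * x + (x ^ 2 - y ^ 2) + tau * (x ^ 3 - 3 * x * y ^ 2) = 0"
    using arg_cong[OF h, of Re] unfolding poly_re_im x_def y_def by simp
  have e2: "c * y + 2 * x * y + tau * (3 * x ^ 2 * y - y ^ 3) = 0"
    using arg_cong[OF h, of Im] unfolding poly_re_im x_def y_def by simp
  show "Re z < 0"
  proof (rule ccontr)
    assume "\<not> Re z < 0"
    hence x0: "x \<ge> 0" by (simp add: x_def)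
    show False
    proof (cases "y = 0")
      case True
      with e1 have "2*kp + c * x + x ^ 2 + tau * x ^ 3 = 0" by simp
      moreover have "c * x \<ge> 0" "x^2 \<ge> 0" "tau * x^3 \<ge> 0" using x0 assms by auto
      ultimately show False using assms by linarith
    next
      case False
      have "y * (c + 2 * x + tau * (3 * x ^ 2 - y ^ 2)) = 0"
        using e2 by (simp add: algebra_simps power2_eq_square power3_eq_cube)
      hence "c + 2 * x + tau * (3 * x ^ 2 - y ^ 2) = 0" using False by simp
      hence T: "tau * y^2 = 3 * tau * x^2 + 2 * x + c" by (simp add: algebra_simps)
      have "tau * (2*kp + c * x + (x ^ 2 - y ^ 2) + tau * (x ^ 3 - 3 * x * y ^ 2))
           = 2*kp*tau + tau*c*x + tau*x^2 + tau^2*x^3 - (1 + 3*tau*x) * (tau * y^2)"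
        by (simp add: algebra_simps power2_eq_square power3_eq_cube)
      also have "\<dots> = 2*kp*tau - c - 2*x - 2*tau*c*x - 8*tau*x^2 - 8*tau^2*x^3"
        unfolding T by (simp add: algebra_simps power2_eq_square power3_eq_cube)
      finally have "2*kp*tau - c - 2*x - 2*tau*c*x - 8*tau*x^2 - 8*tau^2*x^3 = 0"
        using e1 by simp
      moreover have "tau*c*x \<ge> 0" "tau*x^2 \<ge> 0" "tau^2*x^3 \<ge> 0" using x0 assms by auto
      ultimately show False using assms x0 by linarith
    qed
  qed
qed

lemma char_root_bound:
  fixes H z :: complex and r :: nat
  assumes "r \<ge> 2" "2 * cmod H \<le> 1" "z ^ r - H * z ^ (r - 1) - H = 0"
  shows "cmod z \<le> 1"
proof (rule ccontr)
  assume "\<not> cmod z \<le> 1"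
  hence z1: "cmod z > 1" by simp
  have "z ^ r = H * (z ^ (r - 1) + 1)" using assms(3) by (simp add: algebra_simps)
  hence "cmod z ^ r = cmod H * cmod (z ^ (r - 1) + 1)" by (metis norm_mult norm_power)
  also have "\<dots> \<le> cmod H * (cmod z ^ (r - 1) + 1)"
    by (intro mult_left_mono) (auto intro: order.trans[OF norm_triangle_ineq] simp: norm_power)
  also have "\<dots> \<le> (1/2) * (cmod z ^ (r - 1) + 1)"
    using assms(2) by (intro mult_right_mono) auto
  finally have a: "cmod z ^ r \<le> (1/2) * (cmod z ^ (r - 1) + 1)" .
  have b: "cmod z ^ (r - 1) > 1" using z1 assms(1) by (intro one_less_power) auto
  have "cmod z ^ r = cmod z * cmod z ^ (r - 1)"
    using assms(1) by (cases r) auto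
  also have "\<dots> > cmod z ^ (r - 1)" using z1 b by simp
  finally have c: "cmod z ^ (r - 1) < cmod z ^ r" .
  define X where "X = cmod z ^ (r - 1)"
  define Y where "Y = cmod z ^ r"
  have "X < Y" "Y \<le> (1/2) * (X + 1)" "1 < X" using a b c unfolding X_def Y_def by auto
  thus False by (simp add: field_simps)
qed


lemma H0_bound:
  fixes r :: nat and hw ka kv kp tau w :: real
  defines "c \<equiv> 2 * kv + (1 + real r) * kp * hw"
  assumes A: "c^2 - 4*kv^2 - 4*kp*(1-2*ka) \<ge> 0" and B: "1 - 4*ka^2 - 2*c*tau \<ge> 0"
  shows "2 * cmod (H0 r hw ka kv kp tau (\<i> * complex_of_real w)) \<le> 1"
proof -
  define N where "N = complex_of_real ka * (\<i> * complex_of_real w)^2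
      + complex_of_real kv * (\<i> * complex_of_real w) + complex_of_real kp"
  define D where "D = poly (char_poly r hw kv kp tau) (\<i> * complex_of_real w)"
  have ReN: "Re N = kp - ka * w^2" and ImN: "Im N = kv * w"
    unfolding N_def by (simp_all add: power2_eq_square)
  have ReD: "Re D = 2*kp - w^2" and ImD: "Im D = c * w - tau * w^3"
    unfolding D_def char_poly_def c_def poly_re_im by simp_all
  have key: "4 * ((kp - ka * w^2)^2 + (kv * w)^2) \<le> (2*kp - w^2)^2 + (c * w - tau * w^3)^2"
  proof -
    have "(2*kp - w^2)^2 + (c * w - tau * w^3)^2 - 4 * ((kp - ka * w^2)^2 + (kv * w)^2)
        = w^2 * (c^2 - 4*kv^2 - 4*kp*(1-2*ka)) + w^4 * (1 - 4*ka^2 - 2*c*tau) + tau^2 * w^6"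
      by (simp add: eval_nat_numeral algebra_simps)
    moreover have "w^2 * (c^2 - 4*kv^2 - 4*kp*(1-2*ka)) \<ge> 0" using A by simp
    moreover have "w^4 * (1 - 4*ka^2 - 2*c*tau) \<ge> 0" using B by simp
    moreover have "tau^2 * w^6 \<ge> 0" by (simp add: zero_le_even_power)
    ultimately show ?thesis by linarith
  qed
  have nm: "2 * cmod N \<le> cmod D"
  proof -
    have "sqrt (4 * ((Re N)^2 + (Im N)^2)) = sqrt 4 * sqrt ((Re N)^2 + (Im N)^2)"
      by (rule real_sqrt_mult)
    moreover have "sqrt 4 = (2::real)"
      by (metis abs_numeral real_sqrt_abs power2_eq_square numeral_times_numeral semiring_norm(12) semiring_norm(13))
    ultimately have "2 * cmod N = sqrt (4 * ((Re N)^2 + (Im N)^2))"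
      by (simp add: cmod_def)
    also have "\<dots> \<le> sqrt ((Re D)^2 + (Im D)^2)"
      using key unfolding ReN ImN ReD ImD by simp
    also have "\<dots> = cmod D" by (simp add: cmod_def)
    finally show ?thesis .
  qed
  have "H0 r hw ka kv kp tau (\<i> * complex_of_real w) = N / D"
    unfolding H0_def N_def D_def by simp
  moreover have "2 * cmod (N / D) \<le> 1"
  proof (cases "D = 0")
    case True thus ?thesis by simp
  next
    case False
    hence "cmod D > 0" by simp
    thus ?thesis using nm by (simp add: norm_divide field_simps)
  qed
  ultimately show ?thesis by simp
qed

theorem corollary1:
  fixes r :: nat and tau0 ka hw :: real
  assumes "r \<ge> 2" and "tau0 > 0" and "0 < ka" and "ka < 1/2"
    and "hw > 4 * tau0 / ((1 + real r) * (1 + 2 * ka))"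
  shows "\<exists>kv kp. kv > 0 \<and> kp > 0 \<and>
    (\<forall>tau \<in> {0..tau0}.
        hurwitz (char_poly r hw kv kp tau)
      \<and> (\<forall>\<omega>::real. 2 * cmod (H0 r hw ka kv kp tau (\<i> * complex_of_real \<omega>)) \<le> 1)
      \<and> (\<forall>\<omega>::real. \<forall>z::complex.
           z ^ r - H0 r hw ka kv kp tau (\<i> * complex_of_real \<omega>) * z ^ (r - 1)
             - H0 r hw ka kv kp tau (\<i> * complex_of_real \<omega>) = 0 \<longrightarrow> cmod z \<le> 1))"
proof -
  define R where "R = 1 + real r"
  have R0: "R > 0" unfolding R_def by simp
  have ka1: "1 + 2*ka > 0" "1 - 2*ka > 0" using assms by auto
  have "4 * tau0 / (R * (1 + 2 * ka)) > 0" using R0 ka1 assms(2) by simp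
  hence hw0: "hw > 0" using assms(5) unfolding R_def by linarith
  define P where "P = R * hw"
  have P0: "P > 0" unfolding P_def using R0 hw0 by simp
  have RK: "R * (1 + 2*ka) > 0" using R0 ka1 by simp
  have "4 * tau0 / (R * (1 + 2 * ka)) < hw" using assms(5) unfolding R_def by simp
  hence "4 * tau0 < hw * (R * (1 + 2 * ka))" using RK by (simp add: pos_divide_less_eq)
  hence PP: "P * (1 + 2*ka) > 4 * tau0" unfolding P_def by (simp add: algebra_simps)
  define U where "U = (1 - 4*ka^2) / (2*tau0)"
  define L where "L = 4*(1-2*ka) / P"
  have LU: "L/2 < U"
  proof -
    have "2 * (1 - 2*ka) * (2*tau0) < (1-2*ka) * (1+2*ka) * P"
      using mult_strict_left_mono[OF PP ka1(2)] by (simp add: algebra_simps)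
    hence "2 * (1 - 2*ka) / P < (1-2*ka) * (1+2*ka) / (2*tau0)"
      using P0 assms(2) by (simp add: field_simps)
    moreover have "L/2 = 2 * (1 - 2*ka) / P" unfolding L_def using P0 by (simp add: field_simps)
    moreover have "U = (1-2*ka) * (1+2*ka) / (2*tau0)" unfolding U_def
      by (simp add: power2_eq_square algebra_simps)
    ultimately show ?thesis by linarith
  qed
  have L0: "L > 0" unfolding L_def using ka1 P0 by simp
  define kv where "kv = L / 4"
  define kp where "kp = (U - L/2) / P"
  have kv0: "kv > 0" unfolding kv_def using L0 by simp
  have kp0: "kp > 0" unfolding kp_def using LU P0 by simp
  have cU: "2 * kv + (1 + real r) * kp * hw = U"
    unfolding kv_def kp_def using P0 by (simp add: P_def R_def field_simps)
  have kpP: "kp * P = U - L/2" unfolding kp_def using P0 by simp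
  have L12: "1 - 2*ka = L * P / 4" unfolding L_def using P0 by simp
  have A: "U^2 - 4*kv^2 - 4*kp*(1-2*ka) \<ge> 0"
  proof -
    have "U^2 - 4*kv^2 - 4*kp*(1-2*ka) = U^2 - L^2/4 - (kp*P)*L"
      unfolding L12 kv_def by (simp add: algebra_simps power2_eq_square)
    also have "\<dots> = (U - L/2)^2" unfolding kpP by (simp add: algebra_simps power2_eq_square)
    finally show ?thesis by simp
  qed
  have P2: "P > 2 * tau0"
  proof -
    have "P * (1 + 2*ka) < P * 2" using P0 assms(4) by simp
    thus ?thesis using PP by linarith
  qed
  show ?thesis
  proof (intro exI conjI ballI allI impI)
    show "kv > 0" "kp > 0" by (fact kv0, fact kp0)
  next
    fix tau assume t: "tau \<in> {0..tau0}"
    hence t0: "tau \<ge> 0" "tau \<le> tau0" by auto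
    have B: "1 - 4*ka^2 - 2*U*tau \<ge> 0"
    proof -
      have "2*U*tau = (1 - 4*ka^2) * (tau / tau0)" unfolding U_def using assms(2) by (simp add: field_simps)
      moreover have "tau / tau0 \<le> 1" using t0 assms(2) by simp
      moreover have "1 - 4*ka^2 = (1-2*ka)*(1+2*ka)" by (simp add: power2_eq_square algebra_simps)
      hence "1 - 4*ka^2 \<ge> 0" using ka1 by simp
      ultimately have "2*U*tau \<le> 1 - 4*ka^2" using mult_left_le by metis
      thus ?thesis by simp
    qed
    have U0: "U > 0" using LU L0 by simp
    have hc: "U > 2 * kp * tau"
    proof -
      have "2 * kp * tau \<le> 2 * kp * tau0" using kp0 t0 by simp
      also have "\<dots> = (2 * tau0) * kp" by simp
      also have "\<dots> < P * kp" using P2 kp0 by simp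
      also have "\<dots> < U" using kpP L0 by (simp add: mult.commute)
      finally show ?thesis .
    qed
    show "hurwitz (char_poly r hw kv kp tau)"
      unfolding char_poly_def cU using cubic_hurwitz[OF t0(1) U0 kp0 hc] by simp
    fix w :: real
    show hb: "2 * cmod (H0 r hw ka kv kp tau (\<i> * complex_of_real w)) \<le> 1"
      using H0_bound[of kv r kp hw ka tau w] A B unfolding cU by simp
    fix z :: complex
    assume "z ^ r - H0 r hw ka kv kp tau (\<i> * complex_of_real w) * z ^ (r - 1)
             - H0 r hw ka kv kp tau (\<i> * complex_of_real w) = 0"
    thus "cmod z \<le> 1" using char_root_bound[OF assms(1) hb] by simp
  qed
qed

end
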